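(* Let $H$ be an Abelian group, $X$ a simplicial set, $Z\subset X$ a simplicial subset with inclusion $i$, $j:X\to X/Z$ the quotient, $\beta$ a normalized $H$-valued 2-cocycle on $X/Z$ with associated twisting function $\eta$, and $\eta|_X=\eta\circ j$. Then the sequence \[ \mathrm{sDist}_\eta(X/Z)\xrightarrow{j^*}\mathrm{sDist}_{\eta|_X}(X)\xrightarrow{i^*}\mathrm{sDist}_0(Z) \] is left exact: $j^*$ is injective, and the image of $j^*$ is exactly the set of $p$ with $i^*(p)=\delta^{\varphi_0}$, where $\varphi_0(z)=(0,z)$ is the zero section.
   Context: $R$ is a semiring; $D_R(S)$ = finitely supported $p:S\to R$ summing to 1, applied levelwise to simplicial sets. $N(H)$ is the nerve of $H$ ($N(H)_n=H^n$, standard faces/degeneracies). The twisting function of a normalized 2-cocycle $\beta$ on $Y$ is $\eta_1=0$, $\eta_2=\beta$, $\eta_n(y)=(\beta(d_3\cdots d_ny),\eta_{n-1}(d_1y)-\eta_{n-1}(d_0y))$; $N(H)\times_\eta Y$ has simplices $H^n\times Y_n$, $d_0(g,y)=(d_0g+\eta_n(y),d_0y)$, other maps componentwise. $\mathrm{sDist}_\eta(Y)$ is the set of simplicial maps $p:Y\to D_R(N(H)\times_\eta Y)$ with $p_y$ supported on $N(H)_n\times\{y\}$ for all $y\in Y_n$. $\mathrm{sDist}_0(Z)$ uses the untwisted product $N(H)\times Z$ (note $\eta|_X$ vanishes on $Z$). The maps are $(j^*p)_x(h,x)=p_{j(x)}(h,j(x))$ and $(i^*q)_z(h,z)=q_{i(z)}(h,i(z))$.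 $\delta^{\varphi_0}$ is the delta distribution on the zero section. *)

theory Defs
  imports Main
begin

record 'a sset =
  S  :: "nat \<Rightarrow> 'a set"
  fc :: "nat \<Rightarrow> nat \<Rightarrow> 'a \<Rightarrow> 'a"
  dg :: "nat \<Rightarrow> nat \<Rightarrow> 'a \<Rightarrow> 'a"

definition simplicial_set :: "'a sset \<Rightarrow> bool" where
  "simplicial_set X \<longleftrightarrow>
     (\<forall>n. \<forall>x\<in>S X (Suc n). \<forall>i\<le>Suc n. fc X (Suc n) i x \<in> S X n) \<and>
     (\<forall>n. \<forall>x\<in>S X n. \<forall>i\<le>n. dg X n i x \<in> S X (Suc n)) \<and>
     (\<forall>n. \<forall>x\<in>S X (Suc (Suc n)). \<forall>i j. i < j \<and> j \<le> Suc (Suc n) \<longrightarrow>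
        fc X (Suc n) i (fc X (Suc (Suc n)) j x) = fc X (Suc n) (j - 1) (fc X (Suc (Suc n)) i x)) \<and>
     (\<forall>n. \<forall>x\<in>S X n. \<forall>i j. i \<le> j \<and> j \<le> n \<longrightarrow>
        dg X (Suc n) i (dg X n j x) = dg X (Suc n) (Suc j) (dg X n i x)) \<and>
     (\<forall>n. \<forall>x\<in>S X n. \<forall>i j. j \<le> n \<and> i \<le> Suc n \<longrightarrow>
        fc X (Suc n) i (dg X n j x) =
          (if i < j then dg X (n - 1) (j - 1) (fc X n i x)
           else if i = j \<or> i = Suc j then x
           else dg X (n - 1) j (fc X n (i - 1) x)))"

definition simplicial_subset :: "'a sset \<Rightarrow> (nat \<Rightarrow> 'a set) \<Rightarrow> bool" where
  "simplicial_subset X Zs \<longleftrightarrow>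
     (\<forall>n. Zs n \<subseteq> S X n) \<and>
     (\<forall>n. \<forall>z\<in>Zs (Suc n). \<forall>i\<le>Suc n. fc X (Suc n) i z \<in> Zs n) \<and>
     (\<forall>n. \<forall>z\<in>Zs n. \<forall>i\<le>n. dg X n i z \<in> Zs (Suc n))"

text \<open>The quotient X/Z: all simplices of Z are collapsed to the basepoint (None).
  jm Zs n : X_n -> (X/Z)_n is the quotient map j.\<close>

definition jm :: "(nat \<Rightarrow> 'a set) \<Rightarrow> nat \<Rightarrow> 'a \<Rightarrow> 'a option" where
  "jm Zs n x = (if x \<in> Zs n then None else Some x)"

definition quot :: "'a sset \<Rightarrow> (nat \<Rightarrow> 'a set) \<Rightarrow> 'a option sset" where
  "quot X Zs =
     \<lparr> S = (\<lambda>n. insert None (Some ` (S X n - Zs n))),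
       fc = (\<lambda>n i y. case y of None \<Rightarrow> None | Some x \<Rightarrow> jm Zs (n - 1) (fc X n i x)),
       dg = (\<lambda>n i y. case y of None \<Rightarrow> None | Some x \<Rightarrow> jm Zs (Suc n) (dg X n i x)) \<rparr>"

section \<open>Nerve of an abelian group (N(H)_n = H^n as lists of length n)\<close>

definition nface :: "nat \<Rightarrow> nat \<Rightarrow> 'h::ab_group_add list \<Rightarrow> 'h list" where
  "nface n i g = (if i = 0 then tl g else if i = n then butlast g
                  else take (i - 1) g @ [g ! (i - 1) + g ! i] @ drop (Suc i) g)"

definition ndeg :: "nat \<Rightarrow> 'h::ab_group_add list \<Rightarrow> 'h list" where
  "ndeg i g = take i g @ [0] @ drop i g"

definition normalized_2cocycle :: "'a sset \<Rightarrow> ('a \<Rightarrow> 'h::ab_group_add) \<Rightarrow> bool" where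
  "normalized_2cocycle Y \<beta> \<longleftrightarrow>
     (\<forall>\<sigma>\<in>S Y 3. \<beta> (fc Y 3 0 \<sigma>) - \<beta> (fc Y 3 1 \<sigma>) + \<beta> (fc Y 3 2 \<sigma>) - \<beta> (fc Y 3 3 \<sigma>) = 0) \<and>
     (\<forall>y\<in>S Y 1. \<beta> (dg Y 1 0 y) = 0 \<and> \<beta> (dg Y 1 1 y) = 0)"

fun front2 :: "'a sset \<Rightarrow> nat \<Rightarrow> 'a \<Rightarrow> 'a" where
  "front2 Y n y = (if n \<le> 2 then y else front2 Y (n - 1) (fc Y n n y))"

fun eta :: "('a \<Rightarrow> 'h::ab_group_add) \<Rightarrow> 'a sset \<Rightarrow> nat \<Rightarrow> 'a \<Rightarrow> 'h list" where
  "eta \<beta> Y 0 y = []"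
| "eta \<beta> Y (Suc 0) y = []"
| "eta \<beta> Y (Suc (Suc 0)) y = [\<beta> y]"
| "eta \<beta> Y (Suc (Suc (Suc m))) y =
     \<beta> (front2 Y (Suc (Suc (Suc m))) y) #
       map2 (-) (eta \<beta> Y (Suc (Suc m)) (fc Y (Suc (Suc (Suc m))) 1 y))
                (eta \<beta> Y (Suc (Suc m)) (fc Y (Suc (Suc (Suc m))) 0 y))"

section \<open>Twisted products N(H) x_tau Y\<close>

definition tface :: "(nat \<Rightarrow> 'a \<Rightarrow> 'h::ab_group_add list) \<Rightarrow> 'a sset \<Rightarrow> nat \<Rightarrow> nat
     \<Rightarrow> 'h list \<times> 'a \<Rightarrow> 'h list \<times> 'a" where
  "tface \<tau> Y n i v = (case v of (g, y) \<Rightarrow>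
     (if i = 0 then map2 (+) (nface n 0 g) (\<tau> n y) else nface n i g, fc Y n i y))"

definition tdeg :: "'a sset \<Rightarrow> nat \<Rightarrow> nat \<Rightarrow> 'h::ab_group_add list \<times> 'a \<Rightarrow> 'h list \<times> 'a" where
  "tdeg Y n i v = (case v of (g, y) \<Rightarrow> (ndeg i g, dg Y n i y))"

definition is_dist :: "('b \<Rightarrow> 'r::semiring_1) \<Rightarrow> bool" where
  "is_dist q \<longleftrightarrow> finite {v. q v \<noteq> 0} \<and> sum q {v. q v \<noteq> 0} = 1"

definition push :: "('b \<Rightarrow> 'c) \<Rightarrow> ('b \<Rightarrow> 'r::semiring_1) \<Rightarrow> 'c \<Rightarrow> 'r" where
  "push f q w = sum q {v. q v \<noteq> 0 \<and> f v = w}"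

text \<open>sDist_tau(Y): simplicial maps p : Y -> D_R(N(H) x_tau Y) with p_y supported on
  N(H)_n x {y}; p n y is the distribution p_y for y in Y_n (and 0 off the carrier).\<close>

definition sDist :: "'a sset \<Rightarrow> (nat \<Rightarrow> 'a \<Rightarrow> 'h::ab_group_add list)
     \<Rightarrow> (nat \<Rightarrow> 'a \<Rightarrow> 'h list \<times> 'a \<Rightarrow> 'r::semiring_1) set" where
  "sDist Y \<tau> = {p.
     (\<forall>n y. y \<notin> S Y n \<longrightarrow> p n y = (\<lambda>_. 0)) \<and>
     (\<forall>n. \<forall>y\<in>S Y n. is_dist (p n y) \<and>
          (\<forall>g y'. p n y (g, y') \<noteq> 0 \<longrightarrow> length g = n \<and> y' = y)) \<and>
     (\<forall>n. \<forall>y\<in>S Y (Suc n). \<forall>i\<le>Suc n.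
          p n (fc Y (Suc n) i y) = push (tface \<tau> Y (Suc n) i) (p (Suc n) y)) \<and>
     (\<forall>n. \<forall>y\<in>S Y n. \<forall>i\<le>n.
          p (Suc n) (dg Y n i y) = push (tdeg Y n i) (p n y))}"

definition restr_tw :: "(nat \<Rightarrow> 'a option \<Rightarrow> 'h list) \<Rightarrow> (nat \<Rightarrow> 'a set) \<Rightarrow> nat \<Rightarrow> 'a \<Rightarrow> 'h list" where
  "restr_tw \<tau> Zs n x = \<tau> n (jm Zs n x)"

definition zero_tw :: "nat \<Rightarrow> 'a \<Rightarrow> 'h::ab_group_add list" where
  "zero_tw n z = replicate (n - 1) 0"

definition sub_sset :: "'a sset \<Rightarrow> (nat \<Rightarrow> 'a set) \<Rightarrow> 'a sset" where
  "sub_sset X Zs = X\<lparr>S := Zs\<rparr>"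

definition jstar :: "'a sset \<Rightarrow> (nat \<Rightarrow> 'a set)
    \<Rightarrow> (nat \<Rightarrow> 'a option \<Rightarrow> 'h list \<times> 'a option \<Rightarrow> 'r::semiring_1)
    \<Rightarrow> nat \<Rightarrow> 'a \<Rightarrow> 'h list \<times> 'a \<Rightarrow> 'r" where
  "jstar X Zs p n x = (if x \<in> S X n
      then (\<lambda>(g, x'). if x' = x then p n (jm Zs n x) (g, jm Zs n x) else 0)
      else (\<lambda>_. 0))"

definition istar :: "(nat \<Rightarrow> 'a set) \<Rightarrow> (nat \<Rightarrow> 'a \<Rightarrow> 'h list \<times> 'a \<Rightarrow> 'r::semiring_1)
    \<Rightarrow> nat \<Rightarrow> 'a \<Rightarrow> 'h list \<times> 'a \<Rightarrow> 'r" where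
  "istar Zs q n z = (if z \<in> Zs n
      then (\<lambda>(g, z'). if z' = z then q n z (g, z) else 0)
      else (\<lambda>_. 0))"

definition delta0 :: "(nat \<Rightarrow> 'a set) \<Rightarrow> nat \<Rightarrow> 'a \<Rightarrow> 'h::ab_group_add list \<times> 'a \<Rightarrow> 'r::semiring_1" where
  "delta0 Zs n z = (if z \<in> Zs n
      then (\<lambda>(g, z'). if g = replicate n 0 \<and> z' = z then 1 else 0)
      else (\<lambda>_. 0))"

end

theory Submission imports Defs begin

definition dlt :: "'b \<Rightarrow> 'b \<Rightarrow> 'r::semiring_1" where
  "dlt v0 = (\<lambda>w. if w = v0 then 1 else 0)"

lemma push_nz:
  assumes "push f q w \<noteq> 0" shows "\<exists>v. q v \<noteq> 0 \<and> f v = w"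
proof (rule ccontr)
  assume "\<not> (\<exists>v. q v \<noteq> 0 \<and> f v = w)"
  then have e: "{v. q v \<noteq> 0 \<and> f v = w} = {}" by auto
  have "push f q w = 0" unfolding push_def e by simp
  then show False using assms by simp
qed

lemma push_cong: "(\<And>v. q v \<noteq> 0 \<Longrightarrow> a v = b v) \<Longrightarrow> push a q = push b q"
  unfolding push_def by (intro ext sum.cong) auto

lemma push_id: "(\<And>v. q v \<noteq> 0 \<Longrightarrow> a v = v) \<Longrightarrow> push a q = q"
proof (rule ext)
  fix w assume h: "\<And>v. q v \<noteq> 0 \<Longrightarrow> a v = v"
  have "{v. q v \<noteq> 0 \<and> a v = w} = (if q w = 0 then {} else {w})" using h by auto
  then show "push a q w = q w" unfolding push_def by auto
qed

lemma push_sum_image: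
  assumes "finite {v. q v \<noteq> 0}"
  shows "sum (push f q) {u \<in> f ` {v. q v \<noteq> 0}. P u} = sum q {v. q v \<noteq> 0 \<and> P (f v)}"
proof -
  let ?S = "{v. q v \<noteq> 0 \<and> P (f v)}"
  have fin: "finite ?S" using assms by (rule rev_finite_subset) auto
  have "sum q ?S = sum (\<lambda>u. sum q {x \<in> ?S. f x = u}) (f ` ?S)"
    by (rule sum.image_gen[OF fin])
  also have "f ` ?S = {u \<in> f ` {v. q v \<noteq> 0}. P u}" by auto
  also have "sum (\<lambda>u. sum q {x \<in> ?S. f x = u}) {u \<in> f ` {v. q v \<noteq> 0}. P u}
      = sum (push f q) {u \<in> f ` {v. q v \<noteq> 0}. P u}"
    unfolding push_def by (intro sum.cong refl) (auto intro!: sum.cong)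
  finally show ?thesis by simp
qed

lemma push_comp:
  assumes "finite {v. q v \<noteq> 0}"
  shows "push a (push b q) = push (a \<circ> b) q"
proof (rule ext)
  fix w
  have fin2: "finite {u \<in> b ` {v. q v \<noteq> 0}. a u = w}" using assms by auto
  have "push a (push b q) w = sum (push b q) {u. push b q u \<noteq> 0 \<and> a u = w}"
    unfolding push_def ..
  also have "\<dots> = sum (push b q) {u \<in> b ` {v. q v \<noteq> 0}. a u = w}"
    by (rule sum.mono_neutral_left[OF fin2]) (auto dest: push_nz)
  also have "\<dots> = sum q {v. q v \<noteq> 0 \<and> a (b v) = w}"
    by (rule push_sum_image[OF assms])
  also have "\<dots> = push (a \<circ> b) q w" unfolding push_def by simp
  finally show "push a (push b q) w = push (a \<circ> b) q w" .
qed

lemma is_dist_push: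
  assumes "is_dist q" shows "is_dist (push f q)"
proof -
  have fin: "finite {v. q v \<noteq> 0}" using assms unfolding is_dist_def by simp
  have sub: "{u. push f q u \<noteq> 0} \<subseteq> f ` {v. q v \<noteq> 0}" by (auto dest: push_nz)
  have fin2: "finite (f ` {v. q v \<noteq> 0})" using fin by simp
  have "sum (push f q) {u. push f q u \<noteq> 0} = sum (push f q) {u \<in> f ` {v. q v \<noteq> 0}. True}"
    by (rule sum.mono_neutral_left) (use fin2 sub in auto)
  also have "\<dots> = sum q {v. q v \<noteq> 0 \<and> True}" by (rule push_sum_image[OF fin])
  also have "\<dots> = 1" using assms unfolding is_dist_def by simp
  finally show ?thesis unfolding is_dist_def using finite_subset[OF sub fin2] by simp
qed

lemma dist_single:
  assumes "is_dist q" "\<And>v. q v \<noteq> 0 \<Longrightarrow> v = v0"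
  shows "q = dlt v0"
proof -
  have "q v0 \<noteq> 0"
  proof
    assume z: "q v0 = 0"
    have "{v. q v \<noteq> 0} = {}"
    proof (rule equals0I)
      fix v assume "v \<in> {v. q v \<noteq> 0}"
      then have "q v \<noteq> 0" by simp
      moreover then have "v = v0" by (rule assms(2))
      ultimately show False using z by simp
    qed
    then show False using assms(1) unfolding is_dist_def by simp
  qed
  have S: "{v. q v \<noteq> 0} = {v0}"
  proof (rule set_eqI, rule iffI)
    fix v assume "v \<in> {v. q v \<noteq> 0}"
    then show "v \<in> {v0}" using assms(2) by simp
  next
    fix v assume "v \<in> {v0}"
    then show "v \<in> {v. q v \<noteq> 0}" using \<open>q v0 \<noteq> 0\<close> by simp
  qed
  have one: "q v0 = 1" using assms(1) unfolding is_dist_def S by simp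
  show ?thesis
  proof (rule ext)
    fix w show "q w = dlt v0 w"
    proof (cases "w = v0")
      case True then show ?thesis using one by (simp add: dlt_def)
    next
      case False
      then have "q w = 0" using assms(2) by blast
      then show ?thesis using False by (simp add: dlt_def)
    qed
  qed
qed

lemma push_dlt: "push f (dlt v) = (dlt (f v) :: _ \<Rightarrow> 'r::semiring_1)"
proof (rule ext)
  fix w
  have "{u. (dlt v u :: 'r) \<noteq> 0 \<and> f u = w} = (if f v = w then {v} else {})"
    unfolding dlt_def by auto
  then show "push f (dlt v) w = (dlt (f v) w :: 'r)" unfolding push_def by (auto simp: dlt_def)
qed

lemma is_dist_dlt: "is_dist (dlt v :: _ \<Rightarrow> 'r::semiring_1)"
proof -
  have "{u. (dlt v u :: 'r) \<noteq> 0} = {v}" unfolding dlt_def by auto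
  then show ?thesis unfolding is_dist_def by (simp add: dlt_def del: Collect_neg_eq)
qed

lemma push_fst:
  fixes Q :: "'g \<times> 'y \<Rightarrow> 'r::semiring_1" and x :: 'x
  assumes "\<And>v. Q v \<noteq> 0 \<Longrightarrow> snd v = y0"
  shows "push (\<lambda>v. (fst v, x)) Q = (\<lambda>(g, x'). if x' = x then Q (g, y0) else 0)"
proof (rule ext)
  fix w :: "'g \<times> 'x"
  obtain g x' where w: "w = (g, x')" by (cases w)
  show "push (\<lambda>v. (fst v, x)) Q w = (\<lambda>(g, x'). if x' = x then Q (g, y0) else 0) w"
  proof (cases "x' = x")
    case True
    have A: "{v. Q v \<noteq> 0 \<and> (fst v, x) = w} = (if Q (g, y0) = 0 then {} else {(g, y0)})"
    proof (cases "Q (g, y0) = 0")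
      case True
      have "{v. Q v \<noteq> 0 \<and> (fst v, x) = w} = {}"
      proof (rule equals0I)
        fix v assume "v \<in> {v. Q v \<noteq> 0 \<and> (fst v, x) = w}"
        then have "Q v \<noteq> 0" "fst v = g" using w by auto
        moreover then have "snd v = y0" using assms by blast
        ultimately have "v = (g, y0)" by (simp add: prod_eq_iff)
        with \<open>Q v \<noteq> 0\<close> \<open>Q (g, y0) = 0\<close> show False by simp
      qed
      then show ?thesis using True by simp
    next
      case False
      have "{v. Q v \<noteq> 0 \<and> (fst v, x) = w} = {(g, y0)}"
      proof (rule set_eqI, rule iffI)
        fix v assume "v \<in> {v. Q v \<noteq> 0 \<and> (fst v, x) = w}"
        then have "Q v \<noteq> 0" "fst v = g" using w by auto
        moreover then have "snd v = y0" using assms by blast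
        ultimately show "v \<in> {(g, y0)}" by (simp add: prod_eq_iff)
      next
        fix v assume "v \<in> {(g, y0)}"
        then show "v \<in> {v. Q v \<noteq> 0 \<and> (fst v, x) = w}" using w \<open>x' = x\<close> False by simp
      qed
      then show ?thesis using False by simp
    qed
    show ?thesis unfolding push_def A using w True by simp
  next
    case False
    then have "{v. Q v \<noteq> 0 \<and> (fst v, x) = w} = {}" using w by auto
    then show ?thesis unfolding push_def using w False by simp
  qed
qed


lemma S_quot: "S (quot X Zs) n = insert None (Some ` (S X n - Zs n))"
  by (simp add: quot_def)
lemma fc_quot_None[simp]: "fc (quot X Zs) n i None = None"
  by (simp add: quot_def)
lemma dg_quot_None[simp]: "dg (quot X Zs) n i None = None"
  by (simp add: quot_def)
lemma fc_quot_Some: "fc (quot X Zs) n i (Some x) = jm Zs (n - 1) (fc X n i x)"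
  by (simp add: quot_def)
lemma dg_quot_Some: "dg (quot X Zs) n i (Some x) = jm Zs (Suc n) (dg X n i x)"
  by (simp add: quot_def)
lemma None_in_quot[simp]: "None \<in> S (quot X Zs) n"
  by (simp add: S_quot)
lemma Some_in_quot: "Some x \<in> S (quot X Zs) n \<longleftrightarrow> x \<in> S X n \<and> x \<notin> Zs n"
  by (auto simp: S_quot)
lemma jm_in: "x \<in> S X n \<Longrightarrow> jm Zs n x \<in> S (quot X Zs) n"
  by (simp add: jm_def Some_in_quot)

lemma fc_jm:
  assumes "simplicial_subset X Zs" "i \<le> Suc n"
  shows "fc (quot X Zs) (Suc n) i (jm Zs (Suc n) x) = jm Zs n (fc X (Suc n) i x)"
proof (cases "x \<in> Zs (Suc n)")
  case True
  then have "fc X (Suc n) i x \<in> Zs n" using assms unfolding simplicial_subset_def by blast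
  then show ?thesis using True by (simp add: jm_def)
next
  case False
  then show ?thesis by (simp add: jm_def fc_quot_Some)
qed

lemma dg_jm:
  assumes "simplicial_subset X Zs" "i \<le> n"
  shows "dg (quot X Zs) n i (jm Zs n x) = jm Zs (Suc n) (dg X n i x)"
proof (cases "x \<in> Zs n")
  case True
  then have "dg X n i x \<in> Zs (Suc n)" using assms unfolding simplicial_subset_def by blast
  then show ?thesis using True by (simp add: jm_def)
next
  case False
  then show ?thesis by (simp add: jm_def dg_quot_Some)
qed

lemma front2_None: "front2 (quot X Zs) n None = None"
proof (induction n)
  case 0
  then show ?case by (subst front2.simps) simp
next
  case (Suc m)
  then show ?case by (subst front2.simps) (simp del: front2.simps)
qed

lemma eta_None_SS:
  assumes "\<beta> None = 0"
  shows "eta \<beta> (quot X Zs) (Suc (Suc m)) None = replicate (Suc m) 0"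
proof (induction m)
  case 0
  then show ?case using assms by simp
next
  case (Suc m)
  then show ?case using assms by (simp add: front2_None del: front2.simps)
qed

lemma eta_None:
  assumes "normalized_2cocycle (quot X Zs) \<beta>"
  shows "eta \<beta> (quot X Zs) n None = replicate (n - 1) 0"
proof -
  have "\<beta> None = 0" using assms unfolding normalized_2cocycle_def
    by (metis None_in_quot dg_quot_None)
  then show ?thesis
    by (cases n; cases "n - 1") (auto simp: eta_None_SS)
qed

lemma rep_cons: "replicate i x @ x # replicate k x = replicate (Suc (i + k)) x"
  by (induct i) auto

lemma butlast_rep: "butlast (replicate n x) = replicate (n - 1) x"
  by (simp add: butlast_conv_take)

lemma nface_zero: "i \<le> n \<Longrightarrow> nface n i (replicate n (0::'h::ab_group_add)) = replicate (n - 1) 0"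
proof -
  assume i: "i \<le> n"
  show ?thesis
  proof (cases "i = 0 \<or> i = n")
    case True
    then show ?thesis unfolding nface_def by (auto simp: butlast_rep)
  next
    case False
    have e: "Suc (i - 1 + (n - Suc i)) = n - 1" using False i by arith
    have "replicate (i - 1) (0::'h) @ 0 # replicate (n - Suc i) 0 = replicate (n - 1) 0"
      by (simp only: rep_cons e)
    moreover have "i - 1 < n" "i < n" using False i by auto
    ultimately show ?thesis using False i unfolding nface_def by simp
  qed
qed

lemma ndeg_zero: "i \<le> n \<Longrightarrow> ndeg i (replicate n (0::'h::ab_group_add)) = replicate (Suc n) 0"
  unfolding ndeg_def by (simp add: rep_cons)


lemma sDistD:
  assumes "p \<in> sDist Y \<tau>"
  shows "\<And>n y. y \<notin> S Y n \<Longrightarrow> p n y = (\<lambda>_. 0)"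
    and "\<And>n y. y \<in> S Y n \<Longrightarrow> is_dist (p n y)"
    and "\<And>n y g y'. y \<in> S Y n \<Longrightarrow> p n y (g, y') \<noteq> 0 \<Longrightarrow> length g = n \<and> y' = y"
    and "\<And>n y i. y \<in> S Y (Suc n) \<Longrightarrow> i \<le> Suc n \<Longrightarrow>
          p n (fc Y (Suc n) i y) = push (tface \<tau> Y (Suc n) i) (p (Suc n) y)"
    and "\<And>n y i. y \<in> S Y n \<Longrightarrow> i \<le> n \<Longrightarrow>
          p (Suc n) (dg Y n i y) = push (tdeg Y n i) (p n y)"
  using assms unfolding sDist_def by blast+

lemma supp_snd:
  assumes "p \<in> sDist Y \<tau>" "y \<in> S Y n"
  shows "\<And>v. p n y v \<noteq> 0 \<Longrightarrow> snd v = y"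
  using sDistD(3)[OF assms] by (metis prod.collapse)

lemma fin_supp:
  assumes "p \<in> sDist Y \<tau>" "y \<in> S Y n"
  shows "finite {v. p n y v \<noteq> 0}"
  using sDistD(2)[OF assms] unfolding is_dist_def by simp

lemma sDist_None:
  assumes "q \<in> sDist (quot X Zs) \<tau>"
  shows "q n None = dlt (replicate n 0, None)"
proof (induction n)
  case 0
  show ?case
  proof (rule dist_single)
    show "is_dist (q 0 None)" using sDistD(2)[OF assms] by simp
    fix v assume "q 0 None v \<noteq> 0"
    then show "v = (replicate 0 0, None)"
      using sDistD(3)[OF assms, of None 0 "fst v" "snd v"] by (simp add: prod_eq_iff)
  qed
next
  case (Suc n)
  have "q (Suc n) None = q (Suc n) (dg (quot X Zs) n 0 None)" by simp
  also have "\<dots> = push (tdeg (quot X Zs) n 0) (q n None)"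
    by (rule sDistD(5)[OF assms]) simp_all
  also have "\<dots> = dlt (replicate (Suc n) 0, None)"
    unfolding Suc.IH push_dlt by (simp add: tdeg_def ndeg_zero)
  finally show ?case .
qed

lemma jstar_eq:
  assumes "q \<in> sDist (quot X Zs) \<tau>" "x \<in> S X n"
  shows "jstar X Zs q n x = push (\<lambda>v. (fst v, x)) (q n (jm Zs n x))"
proof -
  have "push (\<lambda>v. (fst v, x)) (q n (jm Zs n x))
      = (\<lambda>(g, x'). if x' = x then q n (jm Zs n x) (g, jm Zs n x) else 0)"
    by (rule push_fst) (rule supp_snd[OF assms(1) jm_in[OF assms(2)]])
  then show ?thesis unfolding jstar_def using assms(2) by simp
qed


lemma simp_fcX: "simplicial_set X \<Longrightarrow> \<forall>n. \<forall>x\<in>S X (Suc n). \<forall>i\<le>Suc n. fc X (Suc n) i x \<in> S X n"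
  unfolding simplicial_set_def by (rule conjunct1)

lemma simp_dgX: "simplicial_set X \<Longrightarrow> \<forall>n. \<forall>x\<in>S X n. \<forall>i\<le>n. dg X n i x \<in> S X (Suc n)"
  unfolding simplicial_set_def by (drule conjunct2, rule conjunct1)

lemma jstar_in:
  assumes X: "simplicial_set X" and Z: "simplicial_subset X Zs"
    and q: "q \<in> sDist (quot X Zs) \<tau>"
  shows "jstar X Zs q \<in> sDist X (restr_tw \<tau> Zs)"
proof -
  have fcX: "\<And>n x i. x \<in> S X (Suc n) \<Longrightarrow> i \<le> Suc n \<Longrightarrow> fc X (Suc n) i x \<in> S X n"
    using simp_fcX[OF X] by blast
  have dgX: "\<And>n x i. x \<in> S X n \<Longrightarrow> i \<le> n \<Longrightarrow> dg X n i x \<in> S X (Suc n)"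
    using simp_dgX[OF X] by blast
  have A: "\<forall>n y. y \<notin> S X n \<longrightarrow> jstar X Zs q n y = (\<lambda>_. 0)"
    unfolding jstar_def by simp
  have B: "\<forall>n. \<forall>y\<in>S X n. is_dist (jstar X Zs q n y) \<and>
          (\<forall>g y'. jstar X Zs q n y (g, y') \<noteq> 0 \<longrightarrow> length g = n \<and> y' = y)"
  proof (intro allI ballI conjI impI)
    fix n y assume y: "y \<in> S X n"
    show "is_dist (jstar X Zs q n y)"
      unfolding jstar_eq[OF q y] by (rule is_dist_push, rule sDistD(2)[OF q jm_in[OF y]])
    fix g y' assume nz: "jstar X Zs q n y (g, y') \<noteq> 0"
    then have "y' = y" and nz2: "q n (jm Zs n y) (g, jm Zs n y) \<noteq> 0"
      unfolding jstar_def using y by (auto split: if_splits)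
    then show "length g = n"
      using sDistD(3)[OF q jm_in[OF y] nz2] by simp
    show "y' = y" by fact
  qed
  have C: "\<forall>n. \<forall>y\<in>S X (Suc n). \<forall>i\<le>Suc n.
          jstar X Zs q n (fc X (Suc n) i y) = push (tface (restr_tw \<tau> Zs) X (Suc n) i) (jstar X Zs q (Suc n) y)"
  proof (intro allI ballI impI)
    fix n y i assume y: "y \<in> S X (Suc n)" and i: "i \<le> Suc n"
    have fy: "fc X (Suc n) i y \<in> S X n" using fcX[OF y i] .
    have jy: "jm Zs (Suc n) y \<in> S (quot X Zs) (Suc n)" using jm_in[OF y] .
    let ?Q = "q (Suc n) (jm Zs (Suc n) y)"
    have finQ: "finite {v. ?Q v \<noteq> 0}" using fin_supp[OF q jy] .
    have "jstar X Zs q n (fc X (Suc n) i y)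
        = push (\<lambda>v. (fst v, fc X (Suc n) i y)) (q n (jm Zs n (fc X (Suc n) i y)))"
      using jstar_eq[OF q fy] .
    also have "\<dots> = push (\<lambda>v. (fst v, fc X (Suc n) i y))
                   (q n (fc (quot X Zs) (Suc n) i (jm Zs (Suc n) y)))"
      by (simp add: fc_jm[OF Z i])
    also have "\<dots> = push (\<lambda>v. (fst v, fc X (Suc n) i y))
                   (push (tface \<tau> (quot X Zs) (Suc n) i) ?Q)"
      by (simp add: sDistD(4)[OF q jy i])
    also have "\<dots> = push ((\<lambda>v. (fst v, fc X (Suc n) i y)) \<circ> tface \<tau> (quot X Zs) (Suc n) i) ?Q"
      by (rule push_comp[OF finQ])
    also have "\<dots> = push (tface (restr_tw \<tau> Zs) X (Suc n) i \<circ> (\<lambda>v. (fst v, y))) ?Q"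
    proof (rule push_cong)
      fix v assume "?Q v \<noteq> 0"
      then have "snd v = jm Zs (Suc n) y" using supp_snd[OF q jy] by blast
      then obtain g where v: "v = (g, jm Zs (Suc n) y)" by (metis prod.collapse)
      show "((\<lambda>v. (fst v, fc X (Suc n) i y)) \<circ> tface \<tau> (quot X Zs) (Suc n) i) v =
            (tface (restr_tw \<tau> Zs) X (Suc n) i \<circ> (\<lambda>v. (fst v, y))) v"
        unfolding v by (simp add: tface_def restr_tw_def)
    qed
    also have "\<dots> = push (tface (restr_tw \<tau> Zs) X (Suc n) i) (push (\<lambda>v. (fst v, y)) ?Q)"
      by (rule push_comp[OF finQ, symmetric])
    also have "\<dots> = push (tface (restr_tw \<tau> Zs) X (Suc n) i) (jstar X Zs q (Suc n) y)"
      using jstar_eq[OF q y] by simp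
    finally show "jstar X Zs q n (fc X (Suc n) i y) = push (tface (restr_tw \<tau> Zs) X (Suc n) i) (jstar X Zs q (Suc n) y)" .
  qed
  have D: "\<forall>n. \<forall>y\<in>S X n. \<forall>i\<le>n.
          jstar X Zs q (Suc n) (dg X n i y) = push (tdeg X n i) (jstar X Zs q n y)"
  proof (intro allI ballI impI)
    fix n y i assume y: "y \<in> S X n" and i: "i \<le> n"
    have fy: "dg X n i y \<in> S X (Suc n)" using dgX[OF y i] .
    have jy: "jm Zs n y \<in> S (quot X Zs) n" using jm_in[OF y] .
    let ?Q = "q n (jm Zs n y)"
    have finQ: "finite {v. ?Q v \<noteq> 0}" using fin_supp[OF q jy] .
    have "jstar X Zs q (Suc n) (dg X n i y)
        = push (\<lambda>v. (fst v, dg X n i y)) (q (Suc n) (jm Zs (Suc n) (dg X n i y)))"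
      using jstar_eq[OF q fy] .
    also have "\<dots> = push (\<lambda>v. (fst v, dg X n i y))
                   (q (Suc n) (dg (quot X Zs) n i (jm Zs n y)))"
      by (simp add: dg_jm[OF Z i])
    also have "\<dots> = push (\<lambda>v. (fst v, dg X n i y))
                   (push (tdeg (quot X Zs) n i) ?Q)"
      by (simp add: sDistD(5)[OF q jy i])
    also have "\<dots> = push ((\<lambda>v. (fst v, dg X n i y)) \<circ> tdeg (quot X Zs) n i) ?Q"
      by (rule push_comp[OF finQ])
    also have "\<dots> = push (tdeg X n i \<circ> (\<lambda>v. (fst v, y))) ?Q"
    proof (rule push_cong)
      fix v assume "?Q v \<noteq> 0"
      then have "snd v = jm Zs n y" using supp_snd[OF q jy] by blast
      then obtain g where v: "v = (g, jm Zs n y)" by (metis prod.collapse)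
      show "((\<lambda>v. (fst v, dg X n i y)) \<circ> tdeg (quot X Zs) n i) v =
            (tdeg X n i \<circ> (\<lambda>v. (fst v, y))) v"
        unfolding v by (simp add: tdeg_def)
    qed
    also have "\<dots> = push (tdeg X n i) (push (\<lambda>v. (fst v, y)) ?Q)"
      by (rule push_comp[OF finQ, symmetric])
    also have "\<dots> = push (tdeg X n i) (jstar X Zs q n y)"
      using jstar_eq[OF q y] by simp
    finally show "jstar X Zs q (Suc n) (dg X n i y) = push (tdeg X n i) (jstar X Zs q n y)" .
  qed
  show ?thesis unfolding sDist_def using A B C D by blast
qed

lemma istar_jstar:
  assumes Z: "simplicial_subset X Zs" and q: "q \<in> sDist (quot X Zs) \<tau>"
  shows "istar Zs (jstar X Zs q) = delta0 Zs"
proof (intro ext)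
  fix n z w
  show "istar Zs (jstar X Zs q) n z w = delta0 Zs n z w"
  proof (cases "z \<in> Zs n")
    case True
    then have zX: "z \<in> S X n" using Z unfolding simplicial_subset_def by blast
    obtain g z' where w: "w = (g, z')" by (cases w)
    show ?thesis using True zX unfolding istar_def delta0_def jstar_def w
      by (simp add: jm_def sDist_None[OF q] dlt_def)
  next
    case False
    then show ?thesis unfolding istar_def delta0_def by simp
  qed
qed


lemma jstar_inj:
  assumes q1: "q1 \<in> sDist (quot X Zs) \<tau>" and q2: "q2 \<in> sDist (quot X Zs) \<tau>"
    and eq: "jstar X Zs q1 = jstar X Zs q2"
  shows "q1 = q2"
proof (intro ext)
  fix n y w
  show "q1 n y w = q2 n y w"
  proof (cases "y \<in> S (quot X Zs) n")
    case False
    then show ?thesis using sDistD(1)[OF q1 False] sDistD(1)[OF q2 False] by simp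
  next
    case yin: True
    show ?thesis
    proof (cases y)
      case None
      then show ?thesis using sDist_None[OF q1] sDist_None[OF q2] by simp
    next
      case (Some x)
      then have x: "x \<in> S X n" "x \<notin> Zs n" using yin by (auto simp: Some_in_quot)
      obtain g y' where w: "w = (g, y')" by (cases w)
      show ?thesis
      proof (cases "y' = y")
        case False
        then have "q1 n y w = 0" "q2 n y w = 0"
          using sDistD(3)[OF q1 yin, of g y'] sDistD(3)[OF q2 yin, of g y'] w by auto
        then show ?thesis by simp
      next
        case True
        have "jstar X Zs q1 n x (g, x) = jstar X Zs q2 n x (g, x)" using eq by simp
        then show ?thesis using x True Some w unfolding jstar_def by (simp add: jm_def)
      qed
    qed
  qed
qed

definition qlift :: "'a sset \<Rightarrow> (nat \<Rightarrow> 'a set) \<Rightarrow> (nat \<Rightarrow> 'a \<Rightarrow> 'h::ab_group_add list \<times> 'a \<Rightarrow> 'r::semiring_1)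
    \<Rightarrow> nat \<Rightarrow> 'a option \<Rightarrow> 'h list \<times> 'a option \<Rightarrow> 'r" where
  "qlift X Zs p n y = (if y \<in> S (quot X Zs) n then (case y of None \<Rightarrow> dlt (replicate n 0, None)
      | Some x \<Rightarrow> push (\<lambda>v. (fst v, Some x)) (p n x)) else (\<lambda>_. 0))"

lemma qlift_jm:
  fixes p :: "nat \<Rightarrow> 'a \<Rightarrow> 'h::ab_group_add list \<times> 'a \<Rightarrow> 'r::semiring_1"
  assumes Z: "simplicial_subset X Zs" and p: "p \<in> sDist X \<tau>'" and ip: "istar Zs p = delta0 Zs"
    and x: "x \<in> S X n"
  shows "qlift X Zs p n (jm Zs n x) = push (\<lambda>v. (fst v, jm Zs n x)) (p n x)"
proof (cases "x \<in> Zs n")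
  case True
  have "p n x = dlt (replicate n 0, x)"
  proof (intro ext)
    fix w :: "'h list \<times> 'a"
    obtain g x' where w: "w = (g, x')" by (cases w)
    show "p n x w = dlt (replicate n 0, x) w"
    proof (cases "x' = x")
      case True
      have "istar Zs p n x (g, x) = delta0 Zs n x (g, x)" using ip by simp
      then show ?thesis using True \<open>x \<in> Zs n\<close> w unfolding istar_def delta0_def dlt_def by simp
    next
      case False
      then have "p n x w = 0" using sDistD(3)[OF p x, of g x'] w by auto
      then show ?thesis using False w unfolding dlt_def by simp
    qed
  qed
  then show ?thesis using True unfolding qlift_def by (simp add: jm_def push_dlt)
next
  case False
  then show ?thesis unfolding qlift_def using x by (simp add: jm_def Some_in_quot)
qed


lemma qlift_in:
  fixes \<beta> :: "'a option \<Rightarrow> 'h::ab_group_add"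
  assumes X: "simplicial_set X" and Z: "simplicial_subset X Zs"
    and nc: "normalized_2cocycle (quot X Zs) \<beta>"
    and p: "p \<in> sDist X (restr_tw (eta \<beta> (quot X Zs)) Zs)" and ip: "istar Zs p = delta0 Zs"
  shows "qlift X Zs p \<in> sDist (quot X Zs) (eta \<beta> (quot X Zs))"
proof -
  let ?\<eta> = "eta \<beta> (quot X Zs)"
  let ?q = "qlift X Zs p"
  have fcX: "\<And>n x i. x \<in> S X (Suc n) \<Longrightarrow> i \<le> Suc n \<Longrightarrow> fc X (Suc n) i x \<in> S X n"
    using simp_fcX[OF X] by blast
  have dgX: "\<And>n x i. x \<in> S X n \<Longrightarrow> i \<le> n \<Longrightarrow> dg X n i x \<in> S X (Suc n)"
    using simp_dgX[OF X] by blast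
  have qN: "\<And>n. ?q n None = dlt (replicate n 0, None)" unfolding qlift_def by simp
  have qS: "\<And>n x. x \<in> S X n \<Longrightarrow> x \<notin> Zs n \<Longrightarrow> ?q n (Some x) = push (\<lambda>v. (fst v, Some x)) (p n x)"
    unfolding qlift_def by (simp add: Some_in_quot)
  have A: "\<forall>n y. y \<notin> S (quot X Zs) n \<longrightarrow> ?q n y = (\<lambda>_. 0)"
    unfolding qlift_def by simp
  have B: "\<forall>n. \<forall>y\<in>S (quot X Zs) n. is_dist (?q n y) \<and>
          (\<forall>g y'. ?q n y (g, y') \<noteq> 0 \<longrightarrow> length g = n \<and> y' = y)"
  proof (intro allI ballI)
    fix n y assume yin: "y \<in> S (quot X Zs) n"
    show "is_dist (?q n y) \<and> (\<forall>g y'. ?q n y (g, y') \<noteq> 0 \<longrightarrow> length g = n \<and> y' = y)"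
    proof (cases y)
      case None
      then show ?thesis using qN is_dist_dlt by (simp add: dlt_def)
    next
      case (Some x)
      then have x: "x \<in> S X n" "x \<notin> Zs n" using yin by (auto simp: Some_in_quot)
      have "is_dist (?q n y)" using Some qS[OF x] is_dist_push sDistD(2)[OF p x(1)] by simp
      moreover have "\<forall>g y'. ?q n y (g, y') \<noteq> 0 \<longrightarrow> length g = n \<and> y' = y"
      proof (intro allI impI)
        fix g y' assume "?q n y (g, y') \<noteq> 0"
        then have "push (\<lambda>v. (fst v, Some x)) (p n x) (g, y') \<noteq> 0"
          using Some qS[OF x] by simp
        then obtain v where v: "p n x v \<noteq> 0" "(fst v, Some x) = (g, y')"
          by (blast dest: push_nz)
        have "length (fst v) = n" using sDistD(3)[OF p x(1), of "fst v" "snd v"] v(1) by simp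
        then show "length g = n \<and> y' = y" using v(2) Some by auto
      qed
      ultimately show ?thesis by blast
    qed
  qed
  have C: "\<forall>n. \<forall>y\<in>S (quot X Zs) (Suc n). \<forall>i\<le>Suc n.
          ?q n (fc (quot X Zs) (Suc n) i y) = push (tface ?\<eta> (quot X Zs) (Suc n) i) (?q (Suc n) y)"
  proof (intro allI ballI impI)
    fix n y i assume yin: "y \<in> S (quot X Zs) (Suc n)" and i: "i \<le> Suc n"
    show "?q n (fc (quot X Zs) (Suc n) i y) = push (tface ?\<eta> (quot X Zs) (Suc n) i) (?q (Suc n) y)"
    proof (cases y)
      case None
      have e: "?\<eta> (Suc n) None = replicate n 0" using eta_None[OF nc] by simp
      have nz: "nface (Suc n) i (replicate (Suc n) (0::'h)) = replicate n 0"
        using nface_zero[OF i] by simp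
      have nz0: "nface (Suc n) 0 (replicate (Suc n) (0::'h)) = replicate n 0"
        using nface_zero[of 0 "Suc n"] by simp
      have m2: "map2 (+) (replicate n (0::'h)) (replicate n 0) = replicate n 0"
        by (induct n) auto
      have "tface ?\<eta> (quot X Zs) (Suc n) i (replicate (Suc n) 0, None) = (replicate n 0, None)"
        unfolding tface_def using nz nz0 m2 e by (simp del: replicate_Suc)
      then show ?thesis using None qN by (simp add: push_dlt)
    next
      case (Some x)
      then have x: "x \<in> S X (Suc n)" "x \<notin> Zs (Suc n)" using yin by (auto simp: Some_in_quot)
      have fx: "fc X (Suc n) i x \<in> S X n" using fcX[OF x(1) i] .
      let ?P = "p (Suc n) x"
      have finP: "finite {v. ?P v \<noteq> 0}" using fin_supp[OF p x(1)] .
      have "?q n (fc (quot X Zs) (Suc n) i y) = ?q n (jm Zs n (fc X (Suc n) i x))"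
        using Some by (simp add: fc_quot_Some)
      also have "\<dots> = push (\<lambda>v. (fst v, jm Zs n (fc X (Suc n) i x))) (p n (fc X (Suc n) i x))"
        by (rule qlift_jm[OF Z p ip fx])
      also have "\<dots> = push (\<lambda>v. (fst v, jm Zs n (fc X (Suc n) i x)))
           (push (tface (restr_tw ?\<eta> Zs) X (Suc n) i) ?P)"
        by (simp add: sDistD(4)[OF p x(1) i])
      also have "\<dots> = push ((\<lambda>v. (fst v, jm Zs n (fc X (Suc n) i x))) \<circ> tface (restr_tw ?\<eta> Zs) X (Suc n) i) ?P"
        by (rule push_comp[OF finP])
      also have "\<dots> = push (tface ?\<eta> (quot X Zs) (Suc n) i \<circ> (\<lambda>v. (fst v, Some x))) ?P"
      proof (rule push_cong)
        fix v assume "?P v \<noteq> 0"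
        then have "snd v = x" using supp_snd[OF p x(1)] by blast
        then obtain g where v: "v = (g, x)" by (metis prod.collapse)
        show "((\<lambda>v. (fst v, jm Zs n (fc X (Suc n) i x))) \<circ> tface (restr_tw ?\<eta> Zs) X (Suc n) i) v =
              (tface ?\<eta> (quot X Zs) (Suc n) i \<circ> (\<lambda>v. (fst v, Some x))) v"
          unfolding v using x(2) by (simp add: tface_def restr_tw_def jm_def fc_quot_Some)
      qed
      also have "\<dots> = push (tface ?\<eta> (quot X Zs) (Suc n) i) (push (\<lambda>v. (fst v, Some x)) ?P)"
        by (rule push_comp[OF finP, symmetric])
      also have "\<dots> = push (tface ?\<eta> (quot X Zs) (Suc n) i) (?q (Suc n) y)"
        using Some qS[OF x] by simp
      finally show ?thesis .
    qed
  qed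
  have D: "\<forall>n. \<forall>y\<in>S (quot X Zs) n. \<forall>i\<le>n.
          ?q (Suc n) (dg (quot X Zs) n i y) = push (tdeg (quot X Zs) n i) (?q n y)"
  proof (intro allI ballI impI)
    fix n y i assume yin: "y \<in> S (quot X Zs) n" and i: "i \<le> n"
    show "?q (Suc n) (dg (quot X Zs) n i y) = push (tdeg (quot X Zs) n i) (?q n y)"
    proof (cases y)
      case None
      then show ?thesis using qN by (simp add: push_dlt tdeg_def ndeg_zero[OF i] del: replicate_Suc)
    next
      case (Some x)
      then have x: "x \<in> S X n" "x \<notin> Zs n" using yin by (auto simp: Some_in_quot)
      have fx: "dg X n i x \<in> S X (Suc n)" using dgX[OF x(1) i] .
      let ?P = "p n x"
      have finP: "finite {v. ?P v \<noteq> 0}" using fin_supp[OF p x(1)] .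
      have "?q (Suc n) (dg (quot X Zs) n i y) = ?q (Suc n) (jm Zs (Suc n) (dg X n i x))"
        using Some by (simp add: dg_quot_Some)
      also have "\<dots> = push (\<lambda>v. (fst v, jm Zs (Suc n) (dg X n i x))) (p (Suc n) (dg X n i x))"
        by (rule qlift_jm[OF Z p ip fx])
      also have "\<dots> = push (\<lambda>v. (fst v, jm Zs (Suc n) (dg X n i x)))
           (push (tdeg X n i) ?P)"
        by (simp add: sDistD(5)[OF p x(1) i])
      also have "\<dots> = push ((\<lambda>v. (fst v, jm Zs (Suc n) (dg X n i x))) \<circ> tdeg X n i) ?P"
        by (rule push_comp[OF finP])
      also have "\<dots> = push (tdeg (quot X Zs) n i \<circ> (\<lambda>v. (fst v, Some x))) ?P"
      proof (rule push_cong)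
        fix v assume "?P v \<noteq> 0"
        then have "snd v = x" using supp_snd[OF p x(1)] by blast
        then obtain g where v: "v = (g, x)" by (metis prod.collapse)
        show "((\<lambda>v. (fst v, jm Zs (Suc n) (dg X n i x))) \<circ> tdeg X n i) v =
              (tdeg (quot X Zs) n i \<circ> (\<lambda>v. (fst v, Some x))) v"
          unfolding v by (simp add: tdeg_def dg_quot_Some)
      qed
      also have "\<dots> = push (tdeg (quot X Zs) n i) (push (\<lambda>v. (fst v, Some x)) ?P)"
        by (rule push_comp[OF finP, symmetric])
      also have "\<dots> = push (tdeg (quot X Zs) n i) (?q n y)"
        using Some qS[OF x] by simp
      finally show ?thesis .
    qed
  qed
  show ?thesis unfolding sDist_def using A B C D by blast
qed

lemma jstar_qlift:
  assumes X: "simplicial_set X" and Z: "simplicial_subset X Zs"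
    and nc: "normalized_2cocycle (quot X Zs) \<beta>"
    and p: "p \<in> sDist X (restr_tw (eta \<beta> (quot X Zs)) Zs)" and ip: "istar Zs p = delta0 Zs"
  shows "jstar X Zs (qlift X Zs p) = p"
proof (intro ext)
  fix n x w
  show "jstar X Zs (qlift X Zs p) n x w = p n x w"
  proof (cases "x \<in> S X n")
    case False
    then show ?thesis unfolding jstar_def using sDistD(1)[OF p False] by simp
  next
    case True
    have fin: "finite {v. p n x v \<noteq> 0}" using fin_supp[OF p True] .
    have "jstar X Zs (qlift X Zs p) n x = push (\<lambda>v. (fst v, x)) (qlift X Zs p n (jm Zs n x))"
      by (rule jstar_eq[OF qlift_in[OF X Z nc p ip] True])
    also have "\<dots> = push (\<lambda>v. (fst v, x)) (push (\<lambda>v. (fst v, jm Zs n x)) (p n x))"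
      using qlift_jm[OF Z p ip True] by simp
    also have "\<dots> = push ((\<lambda>v. (fst v, x)) \<circ> (\<lambda>v. (fst v, jm Zs n x))) (p n x)"
      by (rule push_comp[OF fin])
    also have "\<dots> = p n x"
    proof (rule push_id)
      fix v assume "p n x v \<noteq> 0"
      then have "snd v = x" using supp_snd[OF p True] by blast
      then show "((\<lambda>v. (fst v, x)) \<circ> (\<lambda>v. (fst v, jm Zs n x))) v = v" by (simp add: prod_eq_iff)
    qed
    finally show ?thesis by simp
  qed
qed

theorem mainTheorem13:
  fixes X :: "'a sset" and Zs :: "nat \<Rightarrow> 'a set"
    and \<beta> :: "'a option \<Rightarrow> 'h::ab_group_add"
  assumes "simplicial_set X"
    and "simplicial_subset X Zs"
    and "normalized_2cocycle (quot X Zs) \<beta>"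
  shows "inj_on (jstar X Zs)
           (sDist (quot X Zs) (eta \<beta> (quot X Zs))
              :: (nat \<Rightarrow> 'a option \<Rightarrow> 'h list \<times> 'a option \<Rightarrow> 'r::semiring_1) set) \<and>
         jstar X Zs ` (sDist (quot X Zs) (eta \<beta> (quot X Zs))
              :: (nat \<Rightarrow> 'a option \<Rightarrow> 'h list \<times> 'a option \<Rightarrow> 'r::semiring_1) set)
         = {p \<in> sDist X (restr_tw (eta \<beta> (quot X Zs)) Zs).
              istar Zs p = (delta0 Zs :: nat \<Rightarrow> 'a \<Rightarrow> 'h list \<times> 'a \<Rightarrow> 'r)}"
proof (intro conjI)
  show "inj_on (jstar X Zs)
           (sDist (quot X Zs) (eta \<beta> (quot X Zs))
              :: (nat \<Rightarrow> 'a option \<Rightarrow> 'h list \<times> 'a option \<Rightarrow> 'r::semiring_1) set)"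
    by (intro inj_onI) (rule jstar_inj)
  show "jstar X Zs ` (sDist (quot X Zs) (eta \<beta> (quot X Zs))
              :: (nat \<Rightarrow> 'a option \<Rightarrow> 'h list \<times> 'a option \<Rightarrow> 'r::semiring_1) set)
         = {p \<in> sDist X (restr_tw (eta \<beta> (quot X Zs)) Zs).
              istar Zs p = (delta0 Zs :: nat \<Rightarrow> 'a \<Rightarrow> 'h list \<times> 'a \<Rightarrow> 'r)}"
  proof (rule set_eqI, rule iffI)
    fix p assume "p \<in> jstar X Zs ` (sDist (quot X Zs) (eta \<beta> (quot X Zs))
              :: (nat \<Rightarrow> 'a option \<Rightarrow> 'h list \<times> 'a option \<Rightarrow> 'r::semiring_1) set)"
    then obtain q :: "nat \<Rightarrow> 'a option \<Rightarrow> 'h list \<times> 'a option \<Rightarrow> 'r"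
      where q: "q \<in> sDist (quot X Zs) (eta \<beta> (quot X Zs))" and pq: "p = jstar X Zs q" by blast
    show "p \<in> {p \<in> sDist X (restr_tw (eta \<beta> (quot X Zs)) Zs).
              istar Zs p = (delta0 Zs :: nat \<Rightarrow> 'a \<Rightarrow> 'h list \<times> 'a \<Rightarrow> 'r)}"
      using jstar_in[OF assms(1,2) q] istar_jstar[OF assms(2) q] pq by simp
  next
    fix p :: "nat \<Rightarrow> 'a \<Rightarrow> 'h list \<times> 'a \<Rightarrow> 'r"
    assume "p \<in> {p \<in> sDist X (restr_tw (eta \<beta> (quot X Zs)) Zs).
              istar Zs p = (delta0 Zs :: nat \<Rightarrow> 'a \<Rightarrow> 'h list \<times> 'a \<Rightarrow> 'r)}"
    then have p: "p \<in> sDist X (restr_tw (eta \<beta> (quot X Zs)) Zs)" and ip: "istar Zs p = delta0 Zs"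
      by auto
    show "p \<in> jstar X Zs ` (sDist (quot X Zs) (eta \<beta> (quot X Zs))
              :: (nat \<Rightarrow> 'a option \<Rightarrow> 'h list \<times> 'a option \<Rightarrow> 'r::semiring_1) set)"
      using qlift_in[OF assms p ip] jstar_qlift[OF assms p ip] by (metis image_eqI)
  qed
qed

end
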